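(* Let $X=\{x_0,\ldots,x_m\}$, $\tilde X=\{\tilde x_1,\ldots,\tilde x_\ell\}$ (commuting), $d,d'\in\mathbb{R}^k[[\tilde X]]$ and let $c\in\mathbb{R}^\ell\langle\langle X\rangle\rangle$ be proper. Then $(d\cdot d')\circ c=(d\circ c)\sqcup\!\sqcup(d'\circ c)$, provided $d\circ c$ and $d'\circ c$ are well-defined, where $\circ$ denotes the Wiener-Fliess composition product and $d\cdot d'$ the Cauchy product.
   Context: $\mathbb{R}^\ell\langle\langle X\rangle\rangle$: formal power series in noncommuting letters of $X$ with coefficients in $\mathbb{R}^\ell$; $c$ is proper if $(c,\emptyset)=0$; $c_i$ is the $i$-th component. $\mathbb{R}^k[[\tilde X]]$: formal power series in commuting letters $\tilde x_1,\ldots,\tilde x_\ell$ with coefficients in $\mathbb{R}^k$. Shuffle product $\sqcup\!\sqcup$: bilinear, $(x_i\eta)\sqcup\!\sqcup(x_j\xi)=x_i(\eta\sqcup\!\sqcup x_j\xi)+x_j(x_i\eta\sqcup\!\sqcup\xi)$, $\eta\sqcup\!\sqcup\emptyset=\emptyset\sqcup\!\sqcup\eta=\eta$; on vector-valued series componentwise. Cauchy product: $(d\cdot d',\eta)=\sum_{\zeta\nu=\eta}(d,\zeta)(d',\nu)$ with componentwise products in $\mathbb{R}^k$. The Wiener-Fliess composition product of $d\in\mathbb{R}^k[[\tilde X]]$ and proper $c\in\mathbb{R}^\ell\langle\langle X\rangle\rangle$ is $d\circ c=\sum_{\tilde\eta\in\tilde X^\ast}(d,\tilde\eta)\,c^{\sqcup\!\sqcup\tilde\eta}\in\mathbb{R}^k\langle\langle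 X\rangle\rangle$, where $c^{\sqcup\!\sqcup\emptyset}=1$ and $c^{\sqcup\!\sqcup\tilde x_i\tilde\eta}=c_i\sqcup\!\sqcup c^{\sqcup\!\sqcup\tilde\eta}$; it is the generating series of $f_d\circ F_c$. *)

theory Defs
  imports "HOL-Analysis.Analysis" "HOL-Library.Multiset"
begin

text \<open>Commutative series in the
  commuting letters indexed by the finite type 'l are functions on monomials,
  represented as multisets of letters:  'l multiset \<Rightarrow> real^'k.\<close>

text \<open>Shuffle product of two words, as a real-valued series (with multiplicities).\<close>
fun wshuffle :: "'x list \<Rightarrow> 'x list \<Rightarrow> 'x list \<Rightarrow> real" where
  "wshuffle [] v w = (if w = v then 1 else 0)"
| "wshuffle (a # u) [] w = (if w = a # u then 1 else 0)"
| "wshuffle (a # u) (b # v) [] = 0"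
| "wshuffle (a # u) (b # v) (e # w) =
     (if e = a then wshuffle u (b # v) w else 0) + (if e = b then wshuffle (a # u) v w else 0)"

definition shuffle :: "('x::finite list \<Rightarrow> real) \<Rightarrow> ('x list \<Rightarrow> real) \<Rightarrow> ('x list \<Rightarrow> real)" where
  "shuffle c d = (\<lambda>w. \<Sum>(u, v) \<in> {(u, v). length u + length v = length w}. c u * d v * wshuffle u v w)"

definition shuffle_vec :: "('x::finite list \<Rightarrow> real^'k) \<Rightarrow> ('x list \<Rightarrow> real^'k) \<Rightarrow> ('x list \<Rightarrow> real^'k)" where
  "shuffle_vec c d = (\<lambda>w. \<chi> j. shuffle (\<lambda>v. c v $ j) (\<lambda>v. d v $ j) w)"

definition one_series :: "'x list \<Rightarrow> real" where
  "one_series = (\<lambda>w. if w = [] then 1 else 0)"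

definition proper :: "('x list \<Rightarrow> real^'l) \<Rightarrow> bool" where
  "proper c \<longleftrightarrow> c [] = 0"

definition shuffle_power :: "('x::finite list \<Rightarrow> real^'l) \<Rightarrow> 'l multiset \<Rightarrow> ('x list \<Rightarrow> real)" where
  "shuffle_power c M = fold_mset (\<lambda>i acc. shuffle (\<lambda>w. c w $ i) acc) one_series M"

definition cauchy :: "('l multiset \<Rightarrow> real^'k) \<Rightarrow> ('l multiset \<Rightarrow> real^'k) \<Rightarrow> ('l multiset \<Rightarrow> real^'k)" where
  "cauchy d d' = (\<lambda>M. \<chi> j. \<Sum>(A, B) \<in> {(A, B). A + B = M}. d A $ j * d' B $ j)"

definition wf_comp :: "('l::finite multiset \<Rightarrow> real^'k) \<Rightarrow> ('x::finite list \<Rightarrow> real^'l) \<Rightarrow> ('x list \<Rightarrow> real^'k)" where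
  "wf_comp d c = (\<lambda>w. \<chi> j. infsum (\<lambda>M. d M $ j * shuffle_power c M w) UNIV)"

definition wf_comp_defined :: "('l::finite multiset \<Rightarrow> real^'k) \<Rightarrow> ('x::finite list \<Rightarrow> real^'l) \<Rightarrow> bool" where
  "wf_comp_defined d c \<longleftrightarrow> (\<forall>w j. (\<lambda>M. d M $ j * shuffle_power c M w) summable_on UNIV)"

end

theory Submission
  imports Defs
begin

lemma wsh_Nil2: "wshuffle u [] w = (if w = u then 1 else 0)"
  by (cases u) auto

lemma wsh_len0: "length u + length v \<noteq> length w \<Longrightarrow> wshuffle u v w = 0"
  by (induction u v w rule: wshuffle.induct) auto

lemma wsh_len: "wshuffle u v w \<noteq> 0 \<Longrightarrow> length u + length v = length w"
  using wsh_len0 by blast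

lemma wsh_Cons3: "wshuffle u v (e # w) =
  (case u of [] \<Rightarrow> 0 | a # u' \<Rightarrow> if a = e then wshuffle u' v w else 0) +
  (case v of [] \<Rightarrow> 0 | b # v' \<Rightarrow> if b = e then wshuffle u v' w else 0)"
  by (cases u; cases v) (auto simp: wsh_Nil2)

definition L :: "nat \<Rightarrow> ('x::finite) list set" where
  "L n = {u. length u \<le> n}"

lemma finite_L[simp]: "finite (L n)"
proof -
  have e: "L n = {xs. set xs \<subseteq> UNIV \<and> length xs \<le> n}" by (auto simp: L_def)
  have f: "finite {xs. set xs \<subseteq> (UNIV::'a set) \<and> length xs \<le> n}"
    by (rule finite_lists_length_le) simp
  show ?thesis unfolding e by (rule f)
qed

lemma shuffle_alt:
  fixes c d :: "'x::finite list \<Rightarrow> real"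
  assumes "finite U" "finite V" "L (length w) \<subseteq> U" "L (length w) \<subseteq> V"
  shows "shuffle c d w = (\<Sum>u\<in>U. \<Sum>v\<in>V. c u * d v * wshuffle u v w)"
proof -
  let ?S = "{(u, v). length u + length v = length w} :: ('x list \<times> 'x list) set"
  have sub: "?S \<subseteq> U \<times> V" using assms(3,4) by (auto simp: L_def)
  have "shuffle c d w = (\<Sum>(u,v)\<in>?S. c u * d v * wshuffle u v w)"
    by (simp add: shuffle_def)
  also have "\<dots> = (\<Sum>(u,v)\<in>U \<times> V. c u * d v * wshuffle u v w)"
    by (rule sum.mono_neutral_left) (use sub assms(1,2) wsh_len in auto)
  also have "\<dots> = (\<Sum>u\<in>U. \<Sum>v\<in>V. c u * d v * wshuffle u v w)"
    by (rule sum.cartesian_product[symmetric])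
  finally show ?thesis .
qed

lemma shuffle_Nil: "shuffle c d [] = c [] * d []"
proof -
  have "{(u, v). length u + length v = length ([]::'a list)} = {([], [])}" by auto
  thus ?thesis by (simp add: shuffle_def)
qed

lemma L_Suc: "L (Suc n) = insert [] ((\<lambda>(a, u). a # u) ` (UNIV \<times> L n))"
  by (auto simp: L_def image_iff) (metis length_Suc_conv Suc_le_mono le_SucE neq_Nil_conv)

lemma sum_L_Suc:
  "(\<Sum>u\<in>L (Suc n). (case u of [] \<Rightarrow> 0 | a # u' \<Rightarrow> if a = e then h u' else 0)) = (\<Sum>u\<in>L n. h u)"
proof -
  have inj: "inj_on (\<lambda>(a, u). a # u) (UNIV \<times> L n)" by (auto simp: inj_on_def)
  have fin: "finite ((\<lambda>(a, u). a # u) ` (UNIV \<times> L n))" by simp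
  have nm: "[] \<notin> (\<lambda>(a, u). a # u) ` (UNIV \<times> L n)" by auto
  have "(\<Sum>u\<in>L (Suc n). (case u of [] \<Rightarrow> 0 | a # u' \<Rightarrow> if a = e then h u' else 0))
     = (\<Sum>p\<in>UNIV \<times> L n. (if fst p = e then h (snd p) else 0))"
    unfolding L_Suc sum.insert[OF fin nm]
    by (subst sum.reindex[OF inj]) (simp add: split_def del: UNIV_Times_UNIV)
  also have "\<dots> = (\<Sum>a\<in>UNIV. \<Sum>u\<in>L n. if a = e then h u else 0)"
    by (simp add: sum.cartesian_product split_def)
  also have "\<dots> = (\<Sum>u\<in>L n. h u)"
    by (subst sum.swap) simp
  finally show ?thesis .
qed

lemma L_mono: "m \<le> n \<Longrightarrow> L m \<subseteq> L n"
  by (auto simp: L_def)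

lemma shuffle_Cons:
  fixes c d :: "'x::finite list \<Rightarrow> real"
  shows "shuffle c d (e # w) = shuffle (\<lambda>u. c (e # u)) d w + shuffle c (\<lambda>v. d (e # v)) w"
proof -
  let ?n = "length w"
  have p1: "c u * d v * (case u of [] \<Rightarrow> 0 | a # u' \<Rightarrow> if a = e then wshuffle u' v w else 0)
     = (case u of [] \<Rightarrow> 0 | a # u' \<Rightarrow> if a = e then c (e # u') * d v * wshuffle u' v w else 0)"
    for u v by (cases u) auto
  have p2: "c u * d v * (case v of [] \<Rightarrow> 0 | b # v' \<Rightarrow> if b = e then wshuffle u v' w else 0)
     = (case v of [] \<Rightarrow> 0 | b # v' \<Rightarrow> if b = e then c u * d (e # v') * wshuffle u v' w else 0)"
    for u v by (cases v) auto
  have "shuffle c d (e # w) = (\<Sum>u\<in>L (Suc ?n). \<Sum>v\<in>L (Suc ?n). c u * d v * wshuffle u v (e # w))"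
    by (rule shuffle_alt) auto
  also have "\<dots> = (\<Sum>u\<in>L (Suc ?n). \<Sum>v\<in>L (Suc ?n). c u * d v * (case u of [] \<Rightarrow> 0 | a # u' \<Rightarrow> if a = e then wshuffle u' v w else 0))
      + (\<Sum>u\<in>L (Suc ?n). \<Sum>v\<in>L (Suc ?n). c u * d v * (case v of [] \<Rightarrow> 0 | b # v' \<Rightarrow> if b = e then wshuffle u v' w else 0))"
    unfolding wsh_Cons3 by (simp add: distrib_left sum.distrib)
  also have "(\<Sum>u\<in>L (Suc ?n). \<Sum>v\<in>L (Suc ?n). c u * d v * (case u of [] \<Rightarrow> 0 | a # u' \<Rightarrow> if a = e then wshuffle u' v w else 0))
     = (\<Sum>v\<in>L (Suc ?n). \<Sum>u\<in>L ?n. c (e # u) * d v * wshuffle u v w)"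
    unfolding p1 by (subst sum.swap) (simp only: sum_L_Suc)
  also have "\<dots> = shuffle (\<lambda>u. c (e # u)) d w"
    by (subst sum.swap, rule shuffle_alt[symmetric]) (simp_all add: L_mono)
  also have "(\<Sum>u\<in>L (Suc ?n). \<Sum>v\<in>L (Suc ?n). c u * d v * (case v of [] \<Rightarrow> 0 | b # v' \<Rightarrow> if b = e then wshuffle u v' w else 0))
     = (\<Sum>u\<in>L (Suc ?n). \<Sum>v\<in>L ?n. c u * d (e # v) * wshuffle u v w)"
    unfolding p2 by (simp only: sum_L_Suc)
  also have "\<dots> = shuffle c (\<lambda>v. d (e # v)) w"
    by (rule shuffle_alt[symmetric]) (simp_all add: L_mono)
  finally show ?thesis .
qed

lemma shuffle_add_right: "shuffle c (\<lambda>v. d1 v + d2 v) w = shuffle c d1 w + shuffle c d2 w"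
  unfolding shuffle_def by (simp add: split_def algebra_simps sum.distrib)

lemma shuffle_add_left: "shuffle (\<lambda>v. d1 v + d2 v) c w = shuffle d1 c w + shuffle d2 c w"
  unfolding shuffle_def by (simp add: split_def algebra_simps sum.distrib)

lemma shuffle_zero_left: "shuffle (\<lambda>v. 0) c w = 0"
  unfolding shuffle_def by simp

lemma shuffle_sums:
  "shuffle (\<lambda>u. \<Sum>a\<in>A. \<alpha> a * f a u) (\<lambda>v. \<Sum>b\<in>B. \<beta> b * g b v) w
   = (\<Sum>a\<in>A. \<Sum>b\<in>B. \<alpha> a * \<beta> b * shuffle (f a) (g b) w)"
proof -
  have "shuffle (\<lambda>u. \<Sum>a\<in>A. \<alpha> a * f a u) (\<lambda>v. \<Sum>b\<in>B. \<beta> b * g b v) w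
     = (\<Sum>p\<in>{(u, v). length u + length v = length w}. \<Sum>a\<in>A. \<Sum>b\<in>B.
          \<alpha> a * \<beta> b * (f a (fst p) * g b (snd p) * wshuffle (fst p) (snd p) w))"
    unfolding shuffle_def split_def
    by (simp add: sum_distrib_left sum_distrib_right mult_ac sum.swap[of _ B A])
  also have "\<dots> = (\<Sum>a\<in>A. \<Sum>b\<in>B. \<alpha> a * \<beta> b * shuffle (f a) (g b) w)"
    unfolding shuffle_def split_def
    by (simp add: sum_distrib_left) (subst sum.swap, rule sum.cong[OF refl], rule sum.swap)
  finally show ?thesis .
qed

lemma shuffle_assoc: "shuffle c (shuffle d e) w = shuffle (shuffle c d) e w"
proof (induction w arbitrary: c d e)
  case Nil
  then show ?case by (simp add: shuffle_Nil)
next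
  case (Cons a w)
  then show ?case by (simp add: shuffle_Cons shuffle_add_right shuffle_add_left)
qed

lemma shuffle_comm: "shuffle c d w = shuffle d c w"
proof (induction w arbitrary: c d)
  case Nil
  then show ?case by (simp add: shuffle_Nil)
next
  case (Cons a w)
  then show ?case by (simp add: shuffle_Cons)
qed

lemma shuffle_one: "shuffle one_series c w = c w"
proof (induction w arbitrary: c)
  case Nil
  then show ?case by (simp add: shuffle_Nil one_series_def)
next
  case (Cons a w)
  have "(\<lambda>u. one_series (a # u)) = (\<lambda>u. 0)" by (simp add: one_series_def)
  then show ?case using Cons by (simp add: shuffle_Cons shuffle_zero_left)
qed

lemma shuffle_comm_fun: "shuffle c d = shuffle d c"
  using shuffle_comm by blast

lemma shuffle_assoc_fun: "shuffle c (shuffle d e) = shuffle (shuffle c d) e"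
  using shuffle_assoc by blast

lemma cfc: "comp_fun_commute (\<lambda>i acc. shuffle (\<lambda>w. (c::'x::finite list \<Rightarrow> real^'l) w $ i) acc)"
proof
  fix i j :: 'l
  show "(\<lambda>acc. shuffle (\<lambda>w. c w $ i) acc) \<circ> (\<lambda>acc. shuffle (\<lambda>w. c w $ j) acc)
     = (\<lambda>acc. shuffle (\<lambda>w. c w $ j) acc) \<circ> (\<lambda>acc. shuffle (\<lambda>w. c w $ i) acc)"
  proof
    fix a
    have "shuffle (\<lambda>w. c w $ i) (shuffle (\<lambda>w. c w $ j) a) = shuffle (shuffle (\<lambda>w. c w $ i) (\<lambda>w. c w $ j)) a"
      by (rule shuffle_assoc_fun)
    also have "\<dots> = shuffle (shuffle (\<lambda>w. c w $ j) (\<lambda>w. c w $ i)) a"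
      by (simp only: shuffle_comm_fun[of "\<lambda>w. c w $ i"])
    also have "\<dots> = shuffle (\<lambda>w. c w $ j) (shuffle (\<lambda>w. c w $ i) a)"
      by (rule shuffle_assoc_fun[symmetric])
    finally show "((\<lambda>acc. shuffle (\<lambda>w. c w $ i) acc) \<circ> (\<lambda>acc. shuffle (\<lambda>w. c w $ j) acc)) a
     = ((\<lambda>acc. shuffle (\<lambda>w. c w $ j) acc) \<circ> (\<lambda>acc. shuffle (\<lambda>w. c w $ i) acc)) a" by simp
  qed
qed

lemma sp_empty[simp]: "shuffle_power c {#} = one_series"
  by (simp add: shuffle_power_def)

lemma sp_add_mset[simp]: "shuffle_power c (add_mset i M) = shuffle (\<lambda>w. c w $ i) (shuffle_power c M)"
  unfolding shuffle_power_def by (rule comp_fun_commute.fold_mset_add_mset[OF cfc])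

lemma sp_plus: "shuffle_power c (A + B) = shuffle (shuffle_power c A) (shuffle_power c B)"
proof (induction A)
  case empty
  then show ?case by (simp add: fun_eq_iff shuffle_one)
next
  case (add x A)
  then show ?case by (simp add: shuffle_assoc_fun)
qed

lemma sp_zero:
  fixes c :: "'x::finite list \<Rightarrow> real^'l" and M :: "'l multiset"
  shows "proper c \<Longrightarrow> length w < size M \<Longrightarrow> shuffle_power c M w = 0"
proof (induction M arbitrary: w)
  case empty
  then show ?case by simp
next
  case (add i M)
  show ?case unfolding sp_add_mset shuffle_def
  proof (rule sum.neutral, safe)
    fix u v :: "'x list" assume len: "length u + length v = length w"
    show "c u $ i * shuffle_power c M v * wshuffle u v w = 0"
    proof (cases u)
      case Nil
      then show ?thesis using add.prems(1) by (simp add: proper_def)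
    next
      case (Cons a u')
      then have "length v < size M" using len add.prems(2) by simp
      then show ?thesis using add.IH add.prems(1) by simp
    qed
  qed
qed

definition Q :: "nat \<Rightarrow> ('l::finite) multiset set" where
  "Q N = {M. size M \<le> N}"

lemma finite_Q[simp]: "finite (Q N :: ('l::finite) multiset set)"
proof -
  have "(Q N :: 'l multiset set) \<subseteq> mset ` {xs. set xs \<subseteq> UNIV \<and> length xs \<le> N}"
  proof
    fix M assume "M \<in> Q N"
    moreover obtain xs where "M = mset xs" using ex_mset by metis
    ultimately show "M \<in> mset ` {xs. set xs \<subseteq> UNIV \<and> length xs \<le> N}"
      by (auto simp: Q_def)
  qed
  moreover have "finite {xs. set xs \<subseteq> (UNIV::'l set) \<and> length xs \<le> N}"
    by (rule finite_lists_length_le) simp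
  ultimately show ?thesis using finite_subset by blast
qed

lemma wf_comp_finite:
  fixes c :: "'x::finite list \<Rightarrow> real^'l::finite" and d :: "'l multiset \<Rightarrow> real^'k"
  assumes "proper c" "length u \<le> N"
  shows "wf_comp d c u $ j = (\<Sum>A\<in>Q N. d A $ j * shuffle_power c A u)"
proof -
  have "infsum (\<lambda>M. d M $ j * shuffle_power c M u) UNIV = infsum (\<lambda>M. d M $ j * shuffle_power c M u) (Q N)"
  proof (rule infsum_cong_neutral)
    fix x :: "'l multiset" assume "x \<in> UNIV - Q N"
    hence "length u < size x" using assms(2) by (simp add: Q_def)
    thus "d x $ j * shuffle_power c x u = 0" using sp_zero[OF assms(1)] by simp
  qed auto
  thus ?thesis by (simp add: wf_comp_def)
qed

lemma shuffle_local:
  assumes "\<And>u. length u \<le> length w \<Longrightarrow> c u = c' u" "\<And>v. length v \<le> length w \<Longrightarrow> d v = d' v"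
  shows "shuffle c d w = shuffle c' d' w"
  unfolding shuffle_def by (rule sum.cong) (auto simp: assms)

theorem theorem12:
  fixes d d' :: "'l::finite multiset \<Rightarrow> real^'k"
    and c :: "'x::finite list \<Rightarrow> real^'l"
  assumes "proper c"
    and "wf_comp_defined d c"
    and "wf_comp_defined d' c"
  shows "wf_comp (cauchy d d') c = shuffle_vec (wf_comp d c) (wf_comp d' c)"
proof (rule ext, rule vec_eq_iff[THEN iffD2], rule allI)
  fix w :: "'x list" and j :: 'k
  define N where "N = length w"
  define F where "F = (\<lambda>p::'l multiset \<times> 'l multiset. d (fst p) $ j * d' (snd p) $ j * shuffle_power c (fst p + snd p) w)"
  define P :: "('l multiset \<times> 'l multiset) set" where "P = {p \<in> Q N \<times> Q N. fst p + snd p \<in> Q N}"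
  have finP: "finite P" by (simp add: P_def)
  have grp: "{x \<in> P. fst x + snd x = M} = {(A, B). A + B = M}" if "M \<in> Q N" for M
    using that by (auto simp: P_def Q_def)
  have "wf_comp (cauchy d d') c w $ j = (\<Sum>M\<in>Q N. cauchy d d' M $ j * shuffle_power c M w)"
    by (rule wf_comp_finite) (simp_all add: assms N_def)
  also have "\<dots> = (\<Sum>M\<in>Q N. \<Sum>p\<in>{x \<in> P. fst x + snd x = M}. F p)"
  proof (rule sum.cong[OF refl])
    fix M :: "'l multiset" assume M: "M \<in> Q N"
    show "cauchy d d' M $ j * shuffle_power c M w = (\<Sum>p\<in>{x \<in> P. fst x + snd x = M}. F p)"
      unfolding grp[OF M] cauchy_def F_def by (simp add: sum_distrib_right split_def)
  qed
  also have "\<dots> = (\<Sum>p\<in>P. F p)"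
    by (rule sum.group[OF finP finite_Q]) (auto simp: P_def)
  also have "\<dots> = (\<Sum>p\<in>Q N \<times> Q N. F p)"
  proof (rule sum.mono_neutral_left)
    show "\<forall>p\<in>Q N \<times> Q N - P. F p = 0"
      using sp_zero[OF assms(1)] by (force simp: P_def Q_def F_def N_def)
  qed (auto simp: P_def)
  also have "\<dots> = (\<Sum>A\<in>Q N. \<Sum>B\<in>Q N. d A $ j * d' B $ j * shuffle (shuffle_power c A) (shuffle_power c B) w)"
    by (simp add: sum.cartesian_product F_def sp_plus split_def)
  also have "\<dots> = shuffle (\<lambda>u. \<Sum>A\<in>Q N. d A $ j * shuffle_power c A u) (\<lambda>v. \<Sum>B\<in>Q N. d' B $ j * shuffle_power c B v) w"
    by (rule shuffle_sums[symmetric])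
  also have "\<dots> = shuffle (\<lambda>v. wf_comp d c v $ j) (\<lambda>v. wf_comp d' c v $ j) w"
    by (rule shuffle_local) (simp_all add: wf_comp_finite[OF assms(1)] N_def)
  also have "\<dots> = shuffle_vec (wf_comp d c) (wf_comp d' c) w $ j"
    by (simp add: shuffle_vec_def)
  finally show "wf_comp (cauchy d d') c w $ j = shuffle_vec (wf_comp d c) (wf_comp d' c) w $ j" .
qed

end
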